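(* Let $\varepsilon=1+\sqrt2$, $K=\mathbb Q(\sqrt2)$, $\sigma$ its nontrivial Galois automorphism, and let $$\Gamma(2,5)=\left\{\begin{pmatrix}x_0+x_1\sqrt2&\sqrt5(x_2+x_3\sqrt2)\\ \sqrt5(x_2-x_3\sqrt2)&x_0-x_1\sqrt2\end{pmatrix}\in\mathrm{SL}_2(\mathbb R):\ x_i\in\mathbb Z\right\},\qquad H=\left\langle\begin{pmatrix}\varepsilon^2&0\\0&\varepsilon^{-2}\end{pmatrix}\right\rangle.$$ For $\gamma\in\Gamma(2,5)$ put $z_1(\gamma)=x_0+x_1\sqrt2$, $z_2(\gamma)=x_2+x_3\sqrt2\in\mathcal O_K$. Let $n\in\mathbb N$. Consider the set of double cosets $[\gamma]=H\gamma H$ whose elements $\gamma=\begin{pmatrix}a&b\\c&d\end{pmatrix}$ have all four entries nonzero and of the same sign (i.e. $\delta_1(\gamma)=\delta_2(\gamma)=0$) and satisfy $bc=5n$, modulo the identification $[\gamma]\sim[-\gamma]$. Then the map $$\psi:[\gamma]\longmapsto(|z_1(\gamma)|,\ |z_2(\gamma)|)\in D_K(5n+1)\times D_K(n)$$ is well defined, two-to-one, and surjective.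
   Context: For $z\in\mathcal O_K$, $|z|$ denotes the real absolute value of $z\in\mathbb R$ (so $|z|=\pm z$). For $m\in\mathbb N$, $D_K(m)$ is the set of totally positive $z\in\mathcal O_K$ (i.e. $z>0$ and $\sigma(z)>0$) with $z\,\sigma(z)=m$, modulo the equivalence $z\sim z'$ iff $z=\varepsilon^{2k}z'$ for some $k\in\mathbb Z$. *)

theory Defs
  imports "HOL-Analysis.Analysis"
begin

definition eps :: real where "eps = 1 + sqrt 2"

definition OK :: "real set" where
  "OK = {of_int a + of_int b * sqrt 2 | a b :: int. True}"

definition sigmaK :: "real \<Rightarrow> real" where
  "sigmaK z = (THE w. \<exists>a b :: int. z = of_int a + of_int b * sqrt 2 \<and> w = of_int a - of_int b * sqrt 2)"

definition TP :: "nat \<Rightarrow> real set" where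
  "TP m = {z \<in> OK. z > 0 \<and> sigmaK z > 0 \<and> z * sigmaK z = real m}"

definition epsrel :: "real set \<Rightarrow> (real \<times> real) set" where
  "epsrel A = {(z, z'). z \<in> A \<and> z' \<in> A \<and> (\<exists>k :: int. z = eps powi (2 * k) * z')}"

definition DK :: "nat \<Rightarrow> real set set" where
  "DK m = TP m // epsrel (TP m)"

definition gmat :: "int \<Rightarrow> int \<Rightarrow> int \<Rightarrow> int \<Rightarrow> real^2^2" where
  "gmat x0 x1 x2 x3 =
     vector [vector [of_int x0 + of_int x1 * sqrt 2, sqrt 5 * (of_int x2 + of_int x3 * sqrt 2)],
             vector [sqrt 5 * (of_int x2 - of_int x3 * sqrt 2), of_int x0 - of_int x1 * sqrt 2]]"

definition Gamma25 :: "(real^2^2) set" where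
  "Gamma25 = {g. \<exists>x0 x1 x2 x3. g = gmat x0 x1 x2 x3 \<and> det g = 1}"

definition hmat :: "int \<Rightarrow> real^2^2" where
  "hmat k = vector [vector [eps powi (2 * k), 0], vector [0, eps powi (- 2 * k)]]"

definition Hgrp :: "(real^2^2) set" where
  "Hgrp = range hmat"

definition dcoset :: "real^2^2 \<Rightarrow> (real^2^2) set" where
  "dcoset g = {h1 ** g ** h2 | h1 h2. h1 \<in> Hgrp \<and> h2 \<in> Hgrp}"

definition admissible :: "nat \<Rightarrow> real^2^2 \<Rightarrow> bool" where
  "admissible n g \<longleftrightarrow>
     ((\<forall>i j. g $ i $ j > 0) \<or> (\<forall>i j. g $ i $ j < 0)) \<and> g $ 1 $ 2 * g $ 2 $ 1 = 5 * real n"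

definition DCS :: "nat \<Rightarrow> (real^2^2) set set" where
  "DCS n = {C. \<exists>g \<in> Gamma25. C = dcoset g \<and> (\<forall>g' \<in> C. admissible n g')}"

definition pmrel :: "nat \<Rightarrow> ((real^2^2) set \<times> (real^2^2) set) set" where
  "pmrel n = {(C, C'). C \<in> DCS n \<and> C' \<in> DCS n \<and> (C' = C \<or> C' = uminus ` C)}"

definition DomS :: "nat \<Rightarrow> (real^2^2) set set set" where
  "DomS n = DCS n // pmrel n"

definition z1 :: "real^2^2 \<Rightarrow> real" where "z1 g = g $ 1 $ 1"
definition z2 :: "real^2^2 \<Rightarrow> real" where "z2 g = g $ 1 $ 2 / sqrt 5"

definition pv :: "nat \<Rightarrow> real^2^2 \<Rightarrow> real set \<times> real set" where
  "pv n g = (epsrel (TP (5 * n + 1)) `` {\<bar>z1 g\<bar>}, epsrel (TP n) `` {\<bar>z2 g\<bar>})"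

definition psi :: "nat \<Rightarrow> (real^2^2) set set \<Rightarrow> real set \<times> real set" where
  "psi n X = (THE p. \<exists>g \<in> Gamma25. dcoset g \<in> X \<and> p = pv n g)"

end

theory Submission
  imports Defs
begin


lemma two_sq_int: "(p::int)^2 = 2*q^2 \<Longrightarrow> q = 0"
proof (induction "nat \<bar>q\<bar>" arbitrary: p q rule: less_induct)
  case less
  show ?case
  proof (rule ccontr)
    assume q0: "q \<noteq> 0"
    have "even (p^2)" using less.prems by simp
    then obtain r where r: "p = 2*r" by auto
    have qr: "q^2 = 2*r^2" using less.prems r by (simp add: power_mult_distrib)
    then have "even (q^2)" by simp
    then obtain t where t: "q = 2*t" by auto
    have ee: "r^2 = 2*t^2" using qr t by (simp add: power_mult_distrib)
    have "nat \<bar>t\<bar> < nat \<bar>q\<bar>" using t q0 by auto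
    from less.hyps[OF this ee] have "t = 0" .
    with t q0 show False by simp
  qed
qed

lemma sqrt2_indep:
  fixes a b c d :: int
  assumes "of_int a + of_int b * sqrt 2 = of_int c + of_int d * sqrt 2"
  shows "a = c \<and> b = d"
proof (cases "b = d")
  case True thus ?thesis using assms by simp
next
  case False
  have h: "real_of_int (a - c) = real_of_int (d - b) * sqrt 2" using assms by (simp add: algebra_simps)
  have "real_of_int ((a-c)^2) = (real_of_int (d-b))^2 * (sqrt 2)^2" unfolding of_int_power h by (simp only: power_mult_distrib)
  then have "real_of_int ((a-c)^2) = real_of_int (2*(d-b)^2)" by simp
  then have "(a-c)^2 = 2*(d-b)^2" by (simp only: of_int_eq_iff)
  from two_sq_int[OF this] False show ?thesis by simp
qed

definition cp :: "real \<Rightarrow> real \<Rightarrow> bool" where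
  "cp z w \<longleftrightarrow> (\<exists>a b :: int. z = of_int a + of_int b * sqrt 2 \<and> w = of_int a - of_int b * sqrt 2)"

lemma sigma_cp: "cp z w \<Longrightarrow> sigmaK z = w"
  unfolding sigmaK_def cp_def
  apply (rule the_equality)
   apply blast
  using sqrt2_indep by blast

lemma OK_cp: "z \<in> OK \<longleftrightarrow> (\<exists>w. cp z w)"
  unfolding OK_def cp_def by blast

lemma OK_cp_sigma: "z \<in> OK \<Longrightarrow> cp z (sigmaK z)"
  using OK_cp sigma_cp by blast

lemma cp_mult: "cp z w \<Longrightarrow> cp z' w' \<Longrightarrow> cp (z*z') (w*w')"
  unfolding cp_def
proof (elim exE conjE)
  fix a b a' b' :: int
  assume h: "z = of_int a + of_int b * sqrt 2" "w = of_int a - of_int b * sqrt 2"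
     "z' = of_int a' + of_int b' * sqrt 2" "w' = of_int a' - of_int b' * sqrt 2"
  have s: "sqrt 2 * sqrt 2 = (2::real)" by simp
  show "\<exists>a b :: int. z*z' = of_int a + of_int b * sqrt 2 \<and> w*w' = of_int a - of_int b * sqrt 2"
    apply (rule exI[of _ "a*a' + 2*b*b'"], rule exI[of _ "a*b' + b*a'"])
    unfolding h by (simp add: algebra_simps s)
qed

lemma cp_neg: "cp z w \<Longrightarrow> cp (-z) (-w)"
  unfolding cp_def
proof (elim exE conjE)
  fix a b :: int
  assume h: "z = of_int a + of_int b * sqrt 2" "w = of_int a - of_int b * sqrt 2"
  show "\<exists>a b :: int. -z = of_int a + of_int b * sqrt 2 \<and> -w = of_int a - of_int b * sqrt 2"
    by (rule exI[of _ "-a"], rule exI[of _ "-b"]) (simp add: h)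
qed

definition ue :: "int \<Rightarrow> real" where "ue k = eps powi (2*k)"

lemma eps_gt1: "eps > 1" unfolding eps_def by simp

lemma ue_add: "ue (a+b) = ue a * ue b"
  unfolding ue_def using eps_gt1 by (simp add: distrib_left power_int_add)

lemma ue_pos: "ue k > 0" unfolding ue_def using eps_gt1 by simp

lemma ue_0[simp]: "ue 0 = 1" unfolding ue_def by simp

lemma ue_inv: "ue k * ue (-k) = 1" by (metis ue_add ue_0 add.right_inverse)

lemma ue_less: "a < b \<Longrightarrow> ue a < ue b"
  unfolding ue_def using eps_gt1 by (intro power_int_strict_increasing) auto

lemma ue_inj: "ue a = ue b \<Longrightarrow> a = b"
  using ue_less[of a b] ue_less[of b a] by (cases a b rule: linorder_cases) auto

lemma ue_1: "ue 1 = 3 + 2 * sqrt 2"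
  unfolding ue_def eps_def by (simp add: power2_eq_square algebra_simps)

lemma ue_m1: "ue (-1) = 3 - 2 * sqrt 2"
proof -
  have "ue 1 * ue (-1) = 1" using ue_inv by simp
  have "(3 - 2 * sqrt 2) * (3 + 2 * sqrt 2) = (1::real)" by (simp add: algebra_simps)
  have "ue (-1) = ((3 - 2 * sqrt 2) * (3 + 2 * sqrt 2)) * ue (-1)" using \<open>(3 - 2 * sqrt 2) * (3 + 2 * sqrt 2) = (1::real)\<close> by simp
  also have "\<dots> = (3 - 2 * sqrt 2) * (ue 1 * ue (-1))" by (simp add: ue_1)
  also have "\<dots> = 3 - 2 * sqrt 2" using \<open>ue 1 * ue (-1) = 1\<close> by simp
  finally show ?thesis .
qed

lemma cp_ue: "cp (ue k) (ue (-k))"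
proof (induction k rule: int_induct[where k=0])
  case base
  then show ?case unfolding cp_def by (rule exI[of _ 1], rule exI[of _ 0]) simp
next
  case (step1 i)
  have c1: "cp (ue 1) (ue (-1))" unfolding cp_def ue_1 ue_m1 by (rule exI[of _ 3], rule exI[of _ 2]) simp
  have "ue (i+1) = ue i * ue 1" "ue (-(i+1)) = ue (-i) * ue (-1)" by (simp_all add: ue_add[symmetric])
  then show ?case using cp_mult[OF step1(2) c1] by simp
next
  case (step2 i)
  have c1: "cp (ue (-1)) (ue 1)" unfolding cp_def ue_1 ue_m1 by (rule exI[of _ 3], rule exI[of _ "-2"]) simp
  have "ue (i-1) = ue i * ue (-1)" "ue (-(i-1)) = ue (-i) * ue 1" by (simp_all add: ue_add[symmetric])
  then show ?case using cp_mult[OF step2(2) c1] by simp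
qed



definition mk :: "real \<Rightarrow> real \<Rightarrow> real \<Rightarrow> real \<Rightarrow> real^2^2" where
  "mk a b c d = vector [vector [a,b], vector [c,d]]"

lemma mk_nth[simp]: "mk a b c d $1$1 = a" "mk a b c d $1$2 = b" "mk a b c d $2$1 = c" "mk a b c d $2$2 = d"
  by (simp_all add: mk_def)

lemma mk_eta: "g = mk (g$1$1) (g$1$2) (g$2$1) (g$2$2)"
  by (simp add: vec_eq_iff forall_2)

lemma mk_eq: "mk a b c d = mk a' b' c' d' \<longleftrightarrow> a = a' \<and> b = b' \<and> c = c' \<and> d = d'"
  by (metis mk_nth)

lemma mk_mult: "mk a b c d ** mk a' b' c' d' = mk (a*a'+b*c') (a*b'+b*d') (c*a'+d*c') (c*b'+d*d')"
  by (simp add: vec_eq_iff forall_2 matrix_matrix_mult_def sum_2)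

lemma mk_neg: "- mk a b c d = mk (-a) (-b) (-c) (-d)"
  by (simp add: vec_eq_iff forall_2)

lemma det_mk: "det (mk a b c d) = a*d - b*c"
  by (simp add: det_2)

lemma hmat_mk: "hmat k = mk (ue k) 0 0 (ue (-k))"
  unfolding hmat_def mk_def ue_def by simp

lemma gmat_mk: "gmat x0 x1 x2 x3 = mk (of_int x0 + of_int x1 * sqrt 2) (sqrt 5 * (of_int x2 + of_int x3 * sqrt 2))
   (sqrt 5 * (of_int x2 - of_int x3 * sqrt 2)) (of_int x0 - of_int x1 * sqrt 2)"
  unfolding gmat_def mk_def by simp

lemma hgh: "hmat k ** mk a b c d ** hmat l =
   mk (ue k * a * ue l) (ue k * b * ue (-l)) (ue (-k) * c * ue l) (ue (-k) * d * ue (-l))"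
  by (simp add: hmat_mk mk_mult)

lemma hmat_add: "hmat k ** hmat l = hmat (k + l)"
proof -
  have "ue (-(k+l)) = ue (-k) * ue (-l)" using ue_add[of "-k" "-l"] by simp
  then show ?thesis by (simp add: hmat_mk mk_mult ue_add)
qed

lemma hmat_0: "hmat 0 = mat 1"
  by (simp add: hmat_mk mk_def vec_eq_iff forall_2 mat_def)

lemma Gamma25_mk: "mk a b c d \<in> Gamma25 \<longleftrightarrow> cp a d \<and> cp (b / sqrt 5) (c / sqrt 5) \<and> a*d - b*c = 1"
proof
  assume "mk a b c d \<in> Gamma25"
  then obtain x0 x1 x2 x3 where g: "mk a b c d = gmat x0 x1 x2 x3" and dt: "det (mk a b c d) = 1"
    unfolding Gamma25_def by blast
  from g have e: "a = of_int x0 + of_int x1 * sqrt 2" "b = sqrt 5 * (of_int x2 + of_int x3 * sqrt 2)"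
    "c = sqrt 5 * (of_int x2 - of_int x3 * sqrt 2)" "d = of_int x0 - of_int x1 * sqrt 2"
    unfolding gmat_mk mk_eq by auto
  have "cp a d" unfolding cp_def e by blast
  moreover have "cp (b / sqrt 5) (c / sqrt 5)" unfolding cp_def e by auto
  ultimately show "cp a d \<and> cp (b / sqrt 5) (c / sqrt 5) \<and> a*d - b*c = 1" using dt det_mk by simp
next
  assume h: "cp a d \<and> cp (b / sqrt 5) (c / sqrt 5) \<and> a*d - b*c = 1"
  then obtain x0 x1 x2 x3 :: int where e: "a = of_int x0 + of_int x1 * sqrt 2" "d = of_int x0 - of_int x1 * sqrt 2"
     "b / sqrt 5 = of_int x2 + of_int x3 * sqrt 2" "c / sqrt 5 = of_int x2 - of_int x3 * sqrt 2"
    unfolding cp_def by blast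
  have "b = sqrt 5 * (b / sqrt 5)" "c = sqrt 5 * (c / sqrt 5)" by simp_all
  then have "mk a b c d = gmat x0 x1 x2 x3" unfolding gmat_mk mk_eq using e by metis
  moreover have "det (mk a b c d) = 1" using h det_mk by simp
  ultimately show "mk a b c d \<in> Gamma25" unfolding Gamma25_def by blast
qed



lemma dcoset_mem: "g' \<in> dcoset g \<longleftrightarrow> (\<exists>k l. g' = hmat k ** g ** hmat l)"
  unfolding dcoset_def Hgrp_def by blast

lemma dcoset_self: "g \<in> dcoset g"
  unfolding dcoset_mem by (rule exI[of _ 0], rule exI[of _ 0]) (simp add: hmat_0)

lemma hmat_inv: "hmat (-k) ** (hmat k ** g ** hmat l) ** hmat (-l) = g"
proof -
  have "hmat (-k) ** (hmat k ** g ** hmat l) ** hmat (-l) = (hmat (-k) ** hmat k) ** g ** (hmat l ** hmat (-l))"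
    by (simp add: matrix_mul_assoc)
  also have "\<dots> = g" by (simp add: hmat_add hmat_0)
  finally show ?thesis .
qed

lemma dcoset_trans: assumes "g' \<in> dcoset g" shows "dcoset g' = dcoset g"
proof -
  obtain k l where g': "g' = hmat k ** g ** hmat l" using assms dcoset_mem by blast
  have g: "g = hmat (-k) ** g' ** hmat (-l)" using hmat_inv g' by simp
  show ?thesis
  proof (intro set_eqI iffI)
    fix x assume "x \<in> dcoset g'"
    then obtain a b where "x = hmat a ** g' ** hmat b" using dcoset_mem by blast
    also have "hmat a ** g' ** hmat b = (hmat a ** hmat k) ** g ** (hmat l ** hmat b)" unfolding g' by (simp add: matrix_mul_assoc)
    finally have "x = hmat (a+k) ** g ** hmat (l+b)" by (simp add: hmat_add)
    then show "x \<in> dcoset g" using dcoset_mem by blast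
  next
    fix x assume "x \<in> dcoset g"
    then obtain a b where "x = hmat a ** g ** hmat b" using dcoset_mem by blast
    also have "hmat a ** g ** hmat b = (hmat a ** hmat (-k)) ** g' ** (hmat (-l) ** hmat b)" unfolding g by (simp add: matrix_mul_assoc)
    finally have "x = hmat (a+ -k) ** g' ** hmat (-l+b)" by (simp add: hmat_add)
    then show "x \<in> dcoset g'" using dcoset_mem by blast
  qed
qed

lemma hgh_neg: "hmat k ** (- g) ** hmat l = - (hmat k ** g ** hmat l)"
  by (subst (1 2) mk_eta[of g]) (simp add: hgh mk_neg)

lemma dcoset_neg: "uminus ` dcoset g = dcoset (- g)"
proof (intro set_eqI iffI)
  fix x assume "x \<in> uminus ` dcoset g"
  then obtain y where y: "y \<in> dcoset g" "x = - y" by blast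
  then obtain k l where "y = hmat k ** g ** hmat l" using dcoset_mem by blast
  then have "x = - (hmat k ** g ** hmat l)" using y by simp
  then show "x \<in> dcoset (-g)" using dcoset_mem hgh_neg by metis
next
  fix x assume "x \<in> dcoset (-g)"
  then obtain k l where "x = hmat k ** (-g) ** hmat l" using dcoset_mem by blast
  then have "x = - (hmat k ** g ** hmat l)" by (simp add: hgh_neg)
  then show "x \<in> uminus ` dcoset g" using dcoset_mem by blast
qed

definition pos :: "real^2^2 \<Rightarrow> bool" where "pos g \<longleftrightarrow> (\<forall>i j. g $ i $ j > 0)"

lemma pos_mk: "pos (mk a b c d) \<longleftrightarrow> a > 0 \<and> b > 0 \<and> c > 0 \<and> d > 0"
  unfolding pos_def by (simp add: forall_2)

lemma adm_iff: "admissible n g \<longleftrightarrow> (pos g \<or> pos (-g)) \<and> g $ 1 $ 2 * g $ 2 $ 1 = 5 * real n"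
  unfolding admissible_def pos_def by auto

lemma adm_neg: "admissible n (-g) \<longleftrightarrow> admissible n g"
  unfolding adm_iff by auto

lemma pos_H: "pos g \<Longrightarrow> pos (hmat k ** g ** hmat l)"
  by (subst (asm) mk_eta[of g], subst mk_eta[of g]) (simp add: hgh pos_mk ue_pos)

lemma adm_H: "admissible n g \<Longrightarrow> admissible n (hmat k ** g ** hmat l)"
proof -
  assume a: "admissible n g"
  have p: "pos (hmat k ** g ** hmat l) \<or> pos (- (hmat k ** g ** hmat l))"
    using a pos_H[of g k l] pos_H[of "-g" k l] unfolding adm_iff hgh_neg by auto
  have e: "ue k * ue (-k) = 1" "ue l * ue (-l) = 1" by (simp_all add: ue_inv)
  have "(hmat k ** g ** hmat l) $ 1 $ 2 * (hmat k ** g ** hmat l) $ 2 $ 1 =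
     (ue k * ue (-k)) * (ue l * ue (-l)) * (g $ 1 $ 2 * g $ 2 $ 1)"
    by (subst (1 2) mk_eta[of g]) (simp add: hgh mult_ac)
  then show ?thesis using a p e unfolding adm_iff by simp
qed

lemma Gamma_neg: "g \<in> Gamma25 \<Longrightarrow> - g \<in> Gamma25"
proof -
  assume "g \<in> Gamma25"
  then have h: "cp (g$1$1) (g$2$2)" "cp (g$1$2 / sqrt 5) (g$2$1 / sqrt 5)" "g$1$1 * g$2$2 - g$1$2 * g$2$1 = 1"
    by (subst (asm) mk_eta[of g], simp add: Gamma25_mk)+
  have "cp (- (g$1$2 / sqrt 5)) (- (g$2$1 / sqrt 5))" using cp_neg[OF h(2)] .
  then have "cp ((- g$1$2) / sqrt 5) ((- g$2$1) / sqrt 5)" by simp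
  then show ?thesis using cp_neg[OF h(1)] h(3) by (subst mk_eta[of g]) (simp add: mk_neg Gamma25_mk)
qed

lemma Gamma_H: "g \<in> Gamma25 \<Longrightarrow> hmat k ** g ** hmat l \<in> Gamma25"
proof -
  assume "g \<in> Gamma25"
  then have h: "cp (g$1$1) (g$2$2)" "cp (g$1$2 / sqrt 5) (g$2$1 / sqrt 5)" "g$1$1 * g$2$2 - g$1$2 * g$2$1 = 1"
    by (subst (asm) mk_eta[of g], simp add: Gamma25_mk)+
  have cu: "cp (ue (-l)) (ue l)" using cp_ue[of "-l"] by simp
  have c1: "cp (ue k * g$1$1 * ue l) (ue (-k) * g$2$2 * ue (-l))"
    by (intro cp_mult h cp_ue)
  have c2: "cp (ue k * (g$1$2 / sqrt 5) * ue (-l)) (ue (-k) * (g$2$1 / sqrt 5) * ue l)"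
    by (intro cp_mult h cp_ue cu)
  have e: "ue k * ue (-k) = 1" "ue l * ue (-l) = 1" by (simp_all add: ue_inv)
  have d: "ue k * g$1$1 * ue l * (ue (-k) * g$2$2 * ue (-l)) - ue k * g$1$2 * ue (-l) * (ue (-k) * g$2$1 * ue l)
     = (ue k * ue (-k)) * (ue l * ue (-l)) * (g$1$1 * g$2$2 - g$1$2 * g$2$1)"
    by (simp add: algebra_simps)
  show ?thesis
    using c1 c2 d e h(3) by (subst mk_eta[of g]) (simp add: hgh Gamma25_mk mult.assoc)
qed



lemma epsrel_ue: "epsrel A = {(z,z'). z \<in> A \<and> z' \<in> A \<and> (\<exists>k. z = ue k * z')}"
  unfolding epsrel_def ue_def ..

lemma TP_ue: assumes "x \<in> TP m" shows "ue j * x \<in> TP m"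
proof -
  have x: "x \<in> OK" "x > 0" "sigmaK x > 0" "x * sigmaK x = real m" using assms unfolding TP_def by auto
  have c: "cp (ue j * x) (ue (-j) * sigmaK x)" by (intro cp_mult cp_ue OK_cp_sigma x)
  then have s: "sigmaK (ue j * x) = ue (-j) * sigmaK x" by (rule sigma_cp)
  have "ue j * x * (ue (-j) * sigmaK x) = (ue j * ue (-j)) * (x * sigmaK x)" by (simp add: mult_ac)
  then show ?thesis using c s x ue_pos[of j] ue_pos[of "-j"] ue_inv[of j] unfolding TP_def OK_cp by auto
qed

lemma TP_ue_iff: "ue j * x \<in> TP m \<longleftrightarrow> x \<in> TP m"
proof
  assume "ue j * x \<in> TP m"
  from TP_ue[OF this, of "-j"] show "x \<in> TP m" using ue_inv[of "-j"] by (simp add: mult.assoc[symmetric])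
qed (rule TP_ue)

lemma ue_mult_eq: "ue j * x = ue k * y \<longleftrightarrow> x = ue (k - j) * y"
proof -
  have "ue k = ue j * ue (k - j)" using ue_add[of j "k - j"] by simp
  then show ?thesis using ue_pos[of j] by (simp add: mult.assoc)
qed

lemma cls_ue: "epsrel (TP m) `` {ue j * x} = epsrel (TP m) `` {x}"
proof (intro set_eqI)
  fix y
  have "(\<exists>k. ue j * x = ue k * y) \<longleftrightarrow> (\<exists>k. x = ue k * y)"
    unfolding ue_mult_eq
  proof
    assume "\<exists>k. x = ue (k - j) * y"
    then obtain k where "x = ue (k - j) * y" by blast
    then show "\<exists>k. x = ue k * y" by blast
  next
    assume "\<exists>k. x = ue k * y"
    then obtain k where "x = ue k * y" by blast
    then have "x = ue ((k + j) - j) * y" by simp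
    then show "\<exists>k. x = ue (k - j) * y" by blast
  qed
  then show "y \<in> epsrel (TP m) `` {ue j * x} \<longleftrightarrow> y \<in> epsrel (TP m) `` {x}"
    unfolding epsrel_ue using TP_ue_iff by auto
qed

lemma cls_self: "x \<in> TP m \<Longrightarrow> x \<in> epsrel (TP m) `` {x}"
  unfolding epsrel_ue by (auto intro: exI[of _ 0])

lemma cls_eq_D: assumes "x \<in> TP m" "epsrel (TP m) `` {x} = epsrel (TP m) `` {y}"
  shows "\<exists>k. x = ue k * y"
proof -
  have "x \<in> epsrel (TP m) `` {y}" using cls_self[OF assms(1)] assms(2) by simp
  then obtain k where "y = ue k * x" unfolding epsrel_ue by auto
  then have "x = ue (-k) * y" using ue_inv[of "-k"] by (simp add: mult.assoc[symmetric])
  then show ?thesis by blast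
qed

lemma pv_neg: "pv n (-g) = pv n g"
  unfolding pv_def z1_def z2_def by simp

lemma pv_H: "pv n (hmat k ** g ** hmat l) = pv n g"
proof -
  have a1: "\<bar>z1 (hmat k ** g ** hmat l)\<bar> = ue (k + l) * \<bar>z1 g\<bar>"
    unfolding z1_def by (subst mk_eta[of g]) (simp add: hgh ue_add abs_mult ue_pos order.strict_implies_order)
  have u: "ue (k - l) = ue k * ue (-l)" using ue_add[of k "-l"] by simp
  have a2: "\<bar>z2 (hmat k ** g ** hmat l)\<bar> = ue (k - l) * \<bar>z2 g\<bar>"
    unfolding z2_def u by (subst mk_eta[of g]) (simp add: hgh abs_mult ue_pos order.strict_implies_order)
  show ?thesis unfolding pv_def a1 a2 cls_ue ..
qed

lemma DCS_I: assumes "g \<in> Gamma25" "admissible n g" shows "dcoset g \<in> DCS n"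
proof -
  have "\<forall>x\<in>dcoset g. admissible n x"
  proof
    fix x assume "x \<in> dcoset g"
    then obtain k l where "x = hmat k ** g ** hmat l" unfolding dcoset_mem by blast
    then show "admissible n x" using adm_H assms(2) by simp
  qed
  then show ?thesis unfolding DCS_def using assms(1) by blast
qed

lemma DCS_E: assumes "C \<in> DCS n" shows "\<exists>g. g \<in> Gamma25 \<and> admissible n g \<and> C = dcoset g"
proof -
  obtain g where g: "g \<in> Gamma25" "C = dcoset g" "\<forall>x\<in>C. admissible n x" using assms unfolding DCS_def by blast
  then have "admissible n g" using dcoset_self by blast
  then show ?thesis using g by blast
qed

lemma DCS_neg: assumes "C \<in> DCS n" shows "uminus ` C \<in> DCS n"
proof -
  obtain g where g: "g \<in> Gamma25" "admissible n g" "C = dcoset g" using DCS_E[OF assms] by blast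
  have "uminus ` C = dcoset (-g)" using g(3) dcoset_neg by simp
  moreover have "dcoset (-g) \<in> DCS n" using g Gamma_neg adm_neg DCS_I by blast
  ultimately show ?thesis by simp
qed

lemma DomS_iff: "X \<in> DomS n \<longleftrightarrow> (\<exists>g. g \<in> Gamma25 \<and> admissible n g \<and> X = {dcoset g, dcoset (-g)})"
proof
  assume "X \<in> DomS n"
  then obtain C where C: "C \<in> DCS n" "X = pmrel n `` {C}" unfolding DomS_def quotient_def by blast
  then have X: "X = {C, uminus ` C}" using DCS_neg[OF C(1)] unfolding pmrel_def by auto
  obtain g where g: "g \<in> Gamma25" "admissible n g" "C = dcoset g" using DCS_E[OF C(1)] by blast
  have "X = {dcoset g, dcoset (-g)}" using X g(3) dcoset_neg by simp
  then show "\<exists>g. g \<in> Gamma25 \<and> admissible n g \<and> X = {dcoset g, dcoset (-g)}"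
    using g by blast
next
  assume "\<exists>g. g \<in> Gamma25 \<and> admissible n g \<and> X = {dcoset g, dcoset (-g)}"
  then obtain g where g: "g \<in> Gamma25" "admissible n g" "X = {dcoset g, dcoset (-g)}" by blast
  have C: "dcoset g \<in> DCS n" using DCS_I g by blast
  then have "pmrel n `` {dcoset g} = {dcoset g, uminus ` dcoset g}" using DCS_neg[OF C] unfolding pmrel_def by auto
  then have "X = pmrel n `` {dcoset g}" using g dcoset_neg by simp
  then show "X \<in> DomS n" unfolding DomS_def quotient_def using C by blast
qed

lemma DomS_pos: assumes "X \<in> DomS n"
  shows "\<exists>g. g \<in> Gamma25 \<and> pos g \<and> g $ 1 $ 2 * g $ 2 $ 1 = 5 * real n \<and> X = {dcoset g, dcoset (-g)}"
proof -
  obtain g where g: "g \<in> Gamma25" "admissible n g" "X = {dcoset g, dcoset (-g)}" using assms DomS_iff by blast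
  show ?thesis
  proof (cases "pos g")
    case True then show ?thesis using g adm_iff by blast
  next
    case False
    then have "pos (-g)" using g adm_iff by blast
    moreover have "(-g) $ 1 $ 2 * (-g) $ 2 $ 1 = 5 * real n" using g adm_iff by simp
    moreover have "X = {dcoset (-g), dcoset (- (-g))}" using g by auto
    ultimately show ?thesis using g Gamma_neg by blast
  qed
qed

lemma pv_rep: assumes "X = {dcoset g0, dcoset (-g0)}" "dcoset g \<in> X" shows "pv n g = pv n g0"
proof -
  have "g \<in> dcoset g0 \<or> g \<in> dcoset (-g0)"
  proof (cases "dcoset g = dcoset g0")
    case True then show ?thesis using dcoset_self[of g] by simp
  next
    case False
    then have "dcoset g = dcoset (-g0)" using assms by auto
    then show ?thesis using dcoset_self[of g] by simp
  qed
  then obtain k l where "g = hmat k ** g0 ** hmat l \<or> g = hmat k ** (-g0) ** hmat l" using dcoset_mem by blast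
  then show ?thesis by (elim disjE) (simp_all add: pv_H pv_neg)
qed

lemma wd: assumes "X \<in> DomS n" "dcoset g \<in> X" "dcoset g' \<in> X" shows "pv n g = pv n g'"
proof -
  obtain g0 where "X = {dcoset g0, dcoset (-g0)}" using assms(1) DomS_iff by blast
  then show ?thesis using pv_rep assms by metis
qed

lemma psi_eq: assumes "X \<in> DomS n" "g \<in> Gamma25" "dcoset g \<in> X" shows "psi n X = pv n g"
  unfolding psi_def
proof (rule the_equality)
  show "\<exists>g'\<in>Gamma25. dcoset g' \<in> X \<and> pv n g = pv n g'" using assms by blast
next
  fix p assume "\<exists>g'\<in>Gamma25. dcoset g' \<in> X \<and> p = pv n g'"
  then obtain g' where "dcoset g' \<in> X" "p = pv n g'" by blast
  then show "p = pv n g" using wd assms by metis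
qed



lemma ue3: "a = b + c + d \<Longrightarrow> ue a = ue b * ue c * ue d"
  by (simp add: ue_add)

definition Gm :: "real \<Rightarrow> real \<Rightarrow> int \<Rightarrow> real^2^2" where
  "Gm u v j = mk u (sqrt 5 * (ue j * v)) (sqrt 5 * (ue (-j) * sigmaK v)) (sigmaK u)"

lemma TP_D: "x \<in> TP m \<Longrightarrow> cp x (sigmaK x) \<and> x > 0 \<and> sigmaK x > 0 \<and> x * sigmaK x = real m"
  unfolding TP_def using OK_cp_sigma by auto

lemma Gm_props:
  assumes u: "u \<in> TP (5*n+1)" and v: "v \<in> TP n"
  shows "Gm u v j \<in> Gamma25" "pos (Gm u v j)" "admissible n (Gm u v j)"
        "pv n (Gm u v j) = (epsrel (TP (5*n+1)) `` {u}, epsrel (TP n) `` {v})"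
proof -
  note U = TP_D[OF u] and V = TP_D[OF v]
  have s5: "sqrt 5 * sqrt 5 = (5::real)" by simp
  have e: "ue j * ue (-j) = 1" by (rule ue_inv)
  have bc: "sqrt 5 * (ue j * v) * (sqrt 5 * (ue (-j) * sigmaK v)) = 5 * real n"
  proof -
    have "sqrt 5 * (ue j * v) * (sqrt 5 * (ue (-j) * sigmaK v)) = (sqrt 5 * sqrt 5) * (ue j * ue (-j)) * (v * sigmaK v)"
      by (simp add: mult_ac)
    then show ?thesis using e V s5 by simp
  qed
  have cv: "cp (ue j * v) (ue (-j) * sigmaK v)" by (intro cp_mult cp_ue) (use V in blast)
  show "Gm u v j \<in> Gamma25" unfolding Gm_def Gamma25_mk using U cv bc by simp
  show p: "pos (Gm u v j)" unfolding Gm_def pos_mk using U V ue_pos by simp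
  show "admissible n (Gm u v j)" unfolding adm_iff using p bc by (simp add: Gm_def)
  have "\<bar>ue j * v\<bar> = ue j * v" using V ue_pos[of j] by simp
  then show "pv n (Gm u v j) = (epsrel (TP (5*n+1)) `` {u}, epsrel (TP n) `` {v})"
    unfolding pv_def z1_def z2_def Gm_def using U by (simp add: cls_ue)
qed

lemma pos_facts:
  assumes g: "g \<in> Gamma25" "pos g" "g $ 1 $ 2 * g $ 2 $ 1 = 5 * real n"
  shows "g$1$1 \<in> TP (5*n+1)" "g$1$2 / sqrt 5 \<in> TP n" "sigmaK (g$1$1) = g$2$2"
        "sigmaK (g$1$2 / sqrt 5) = g$2$1 / sqrt 5"
        "pv n g = (epsrel (TP (5*n+1)) `` {g$1$1}, epsrel (TP n) `` {g$1$2 / sqrt 5})"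
proof -
  have h: "cp (g$1$1) (g$2$2)" "cp (g$1$2 / sqrt 5) (g$2$1 / sqrt 5)" "g$1$1 * g$2$2 - g$1$2 * g$2$1 = 1"
    using g(1) by (subst (asm) mk_eta[of g], simp add: Gamma25_mk)+
  have p: "g$1$1 > 0" "g$1$2 > 0" "g$2$1 > 0" "g$2$2 > 0" using g(2) unfolding pos_def by auto
  show s1: "sigmaK (g$1$1) = g$2$2" using sigma_cp h by blast
  show s2: "sigmaK (g$1$2 / sqrt 5) = g$2$1 / sqrt 5" using sigma_cp h by blast
  show "g$1$1 \<in> TP (5*n+1)" unfolding TP_def OK_cp using h s1 p g(3) by auto
  have "g$1$2 / sqrt 5 * (g$2$1 / sqrt 5) = g $ 1 $ 2 * g $ 2 $ 1 / (sqrt 5 * sqrt 5)" by simp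
  also have "\<dots> = real n" using g(3) by simp
  finally show "g$1$2 / sqrt 5 \<in> TP n" unfolding TP_def OK_cp using h s2 p by auto
  show "pv n g = (epsrel (TP (5*n+1)) `` {g$1$1}, epsrel (TP n) `` {g$1$2 / sqrt 5})"
    unfolding pv_def z1_def z2_def using p by simp
qed

definition XG :: "real \<Rightarrow> real \<Rightarrow> int \<Rightarrow> (real^2^2) set set" where
  "XG u v j = {dcoset (Gm u v j), dcoset (- Gm u v j)}"

lemma XG_DomS: "u \<in> TP (5*n+1) \<Longrightarrow> v \<in> TP n \<Longrightarrow> XG u v j \<in> DomS n"
  unfolding XG_def DomS_iff using Gm_props by blast

lemma psi_XG: assumes "u \<in> TP (5*n+1)" "v \<in> TP n" shows
   "psi n (XG u v j) = (epsrel (TP (5*n+1)) `` {u}, epsrel (TP n) `` {v})"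
proof -
  have "psi n (XG u v j) = pv n (Gm u v j)"
    by (rule psi_eq[OF XG_DomS[OF assms]]) (simp_all add: Gm_props[OF assms] XG_def)
  then show ?thesis using Gm_props[OF assms] by simp
qed

lemma XG_distinct: assumes u: "u \<in> TP (5*n+1)" and v: "v \<in> TP n" shows "XG u v 0 \<noteq> XG u v 1"
proof
  assume eq: "XG u v 0 = XG u v 1"
  note U = TP_D[OF u] and V = TP_D[OF v]
  have "dcoset (Gm u v 1) \<in> XG u v 0" using eq unfolding XG_def by auto
  then have "Gm u v 1 \<in> dcoset (Gm u v 0) \<or> Gm u v 1 \<in> dcoset (- Gm u v 0)"
    unfolding XG_def using dcoset_self[of "Gm u v 1"] by auto
  then obtain k l where "Gm u v 1 = hmat k ** Gm u v 0 ** hmat l \<or> Gm u v 1 = hmat k ** (- Gm u v 0) ** hmat l"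
    unfolding dcoset_mem by blast
  then show False
  proof
    assume "Gm u v 1 = hmat k ** Gm u v 0 ** hmat l"
    then have e: "u = ue k * u * ue l" "sqrt 5 * (ue 1 * v) = ue k * (sqrt 5 * (ue 0 * v)) * ue (-l)"
      unfolding Gm_def hgh mk_eq by auto
    have "ue 0 = ue (k + l)" using e(1) U by (simp add: ue_add)
    then have kl: "k + l = 0" using ue_inj by metis
    have "ue 1 = ue (k - l)" using e(2) V by (simp add: ue3[of "k - l" k 0 "-l"] mult_ac)
    then have "1 = k - l" using ue_inj by metis
    with kl show False by presburger
  next
    assume "Gm u v 1 = hmat k ** (- Gm u v 0) ** hmat l"
    then have "u = - (ue k * u * ue l)" unfolding Gm_def hgh mk_neg mk_eq by auto
    moreover have "ue k * u * ue l > 0" using U ue_pos by simp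
    ultimately show False using U by simp
  qed
qed

lemma fiber_sub:
  assumes X: "X \<in> DomS n" and u: "u \<in> TP (5*n+1)" and v: "v \<in> TP n"
    and ps: "psi n X = (epsrel (TP (5*n+1)) `` {u}, epsrel (TP n) `` {v})"
  shows "X = XG u v 0 \<or> X = XG u v 1"
proof -
  note U = TP_D[OF u] and V = TP_D[OF v]
  obtain g where g: "g \<in> Gamma25" "pos g" "g $ 1 $ 2 * g $ 2 $ 1 = 5 * real n" "X = {dcoset g, dcoset (-g)}"
    using DomS_pos[OF X] by blast
  note F = pos_facts[OF g(1-3)]
  have "psi n X = pv n g" using psi_eq[OF X g(1)] g(4) by simp
  then have "epsrel (TP (5*n+1)) `` {g$1$1} = epsrel (TP (5*n+1)) `` {u}"
     "epsrel (TP n) `` {g$1$2 / sqrt 5} = epsrel (TP n) `` {v}" using ps F(5) by auto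
  then obtain i j where ij: "g$1$1 = ue i * u" "g$1$2 / sqrt 5 = ue j * v"
    using cls_eq_D F(1,2) by metis
  have "sigmaK (g$1$1) = ue (-i) * sigmaK u" unfolding ij(1)
    by (rule sigma_cp, intro cp_mult cp_ue) (use U in blast)
  then have d: "g$2$2 = ue (-i) * sigmaK u" using F(3) by simp
  have "sigmaK (g$1$2 / sqrt 5) = ue (-j) * sigmaK v" unfolding ij(2)
    by (rule sigma_cp, intro cp_mult cp_ue) (use V in blast)
  then have "g$2$1 / sqrt 5 = ue (-j) * sigmaK v" using F(4) by simp
  then have c: "g$2$1 = sqrt 5 * (ue (-j) * sigmaK v)" by (simp add: field_simps)
  have b: "g$1$2 = sqrt 5 * (ue j * v)" using ij(2) by (simp add: field_simps)
  define r where "r = (i + j) mod 2"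
  define k where "k = (i + (j - r)) div 2"
  define l where "l = i - k"
  have r01: "r = 0 \<or> r = 1" unfolding r_def by presburger
  have kl1: "i = k + l + 0" unfolding l_def by simp
  have kl2: "j = k + r + (-l)" unfolding l_def k_def r_def by presburger
  have kl3: "-j = (-k) + (-r) + l" using kl2 by simp
  have kl4: "-i = (-k) + 0 + (-l)" using kl1 by simp
  have "g = hmat k ** Gm u v r ** hmat l"
    apply (subst mk_eta[of g])
    unfolding Gm_def hgh mk_eq ij(1) b c d ue3[OF kl1] ue3[OF kl2] ue3[OF kl3] ue3[OF kl4]
    by (simp add: mult_ac)
  then have "g \<in> dcoset (Gm u v r)" unfolding dcoset_mem by blast
  then have e1: "dcoset g = dcoset (Gm u v r)" by (rule dcoset_trans)
  then have "dcoset (-g) = dcoset (- Gm u v r)" using dcoset_neg by metis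
  then have "X = XG u v r" unfolding XG_def g(4) e1 by simp
  then show ?thesis using r01 by auto
qed

theorem theorem4p11:
  fixes n :: nat
  shows "(\<forall>X \<in> DomS n. \<forall>g g'. g \<in> Gamma25 \<and> g' \<in> Gamma25 \<and> dcoset g \<in> X \<and> dcoset g' \<in> X
            \<longrightarrow> pv n g = pv n g')
       \<and> psi n ` DomS n = DK (5 * n + 1) \<times> DK n
       \<and> (\<forall>p \<in> DK (5 * n + 1) \<times> DK n. card {X \<in> DomS n. psi n X = p} = 2)"
proof (intro conjI)
  show "\<forall>X \<in> DomS n. \<forall>g g'. g \<in> Gamma25 \<and> g' \<in> Gamma25 \<and> dcoset g \<in> X \<and> dcoset g' \<in> X
            \<longrightarrow> pv n g = pv n g'" using wd by blast
  show "psi n ` DomS n = DK (5 * n + 1) \<times> DK n"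
  proof (intro set_eqI iffI)
    fix p assume "p \<in> psi n ` DomS n"
    then obtain X where X: "X \<in> DomS n" "p = psi n X" by blast
    obtain g where g: "g \<in> Gamma25" "pos g" "g $ 1 $ 2 * g $ 2 $ 1 = 5 * real n" "X = {dcoset g, dcoset (-g)}"
      using DomS_pos[OF X(1)] by blast
    note F = pos_facts[OF g(1-3)]
    have "p = pv n g" using psi_eq[OF X(1) g(1)] g(4) X(2) by simp
    then show "p \<in> DK (5 * n + 1) \<times> DK n" unfolding F(5) DK_def using F(1,2) by (auto intro: quotientI)
  next
    fix p assume "p \<in> DK (5 * n + 1) \<times> DK n"
    then obtain u v where u: "u \<in> TP (5*n+1)" and v: "v \<in> TP n"
      and p: "p = (epsrel (TP (5*n+1)) `` {u}, epsrel (TP n) `` {v})"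
      unfolding DK_def quotient_def by blast
    then show "p \<in> psi n ` DomS n" using XG_DomS[OF u v] psi_XG[OF u v] by (metis image_eqI)
  qed
  show "\<forall>p \<in> DK (5 * n + 1) \<times> DK n. card {X \<in> DomS n. psi n X = p} = 2"
  proof
    fix p assume "p \<in> DK (5 * n + 1) \<times> DK n"
    then obtain u v where u: "u \<in> TP (5*n+1)" and v: "v \<in> TP n"
      and p: "p = (epsrel (TP (5*n+1)) `` {u}, epsrel (TP n) `` {v})"
      unfolding DK_def quotient_def by blast
    have "{X \<in> DomS n. psi n X = p} = {XG u v 0, XG u v 1}"
    proof (intro set_eqI iffI)
      fix X assume "X \<in> {X \<in> DomS n. psi n X = p}"
      then show "X \<in> {XG u v 0, XG u v 1}" using fiber_sub[OF _ u v] p by auto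
    next
      fix X assume "X \<in> {XG u v 0, XG u v 1}"
      then show "X \<in> {X \<in> DomS n. psi n X = p}" using XG_DomS[OF u v] psi_XG[OF u v] p by auto
    qed
    then show "card {X \<in> DomS n. psi n X = p} = 2" using XG_distinct[OF u v] by simp
  qed
qed

end
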